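(* Let $N,n,T_h\in\mathbb{Z}_{>0}$, $\varepsilon>0$, for each $i\in\{1,\dots,N\}$ let $A_i,B_i\in\mathbb{R}^{n\times n}$ with $B_i$ invertible, and let $x_1^{\mathsf d},\dots,x_N^{\mathsf d}\in\mathbb{R}^n$. Consider the discrete-time system on $(x,\beta)\in\mathbb{R}^{nN}\times\mathbb{R}_{>0}^N$, \[ x(k+1)=f_1(x(k),\beta(k)),\qquad \beta(k+1)=f_2(x(k),\beta(k)), \] where, writing $x=[x_1;\dots;x_N]$, \[ \tilde P(x,\beta):=\big(\tfrac1N1_N\oslash[K(x)\beta]\big)^{\mathrm{diag}}K(x)\,\beta^{\mathrm{diag}}, \] $f_1(x,\beta)$ is the vector whose $i$-th block ($i=1,\dots,N$) is $\bar A_ix_i+(I_n-\bar A_i)\,N\sum_{j=1}^N\tilde P_{ij}(x,\beta)\,x_j^{\mathsf d}$, and \[ f_2(x,\beta):=\tfrac1N1_N\oslash\Big[K(f_1(x,\beta))^\top\big(\tfrac1N1_N\oslash[K(x)\beta]\big)\Big]. \] Then this system has at least one equilibrium point $(x^{\mathsf e},\beta^{\mathsf e})\in\mathbb{R}^{nN}\times(\mathbb{R}_{>0}^N/{\sim})$, i.e. a pair with $f_1(x^{\mathsf e},\beta^{\mathsf e})=x^{\mathsf e}$ and $f_2(x^{\mathsf e},\beta^{\mathsf e})\sim\beta^{\mathsf e}$.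
   Context: Notation: $v^{\mathrm{diag}}$ is the diagonal matrix with diagonal $v$; $\oslash$ is elementwise division of positive vectors; $1_N$ is the all-ones vector; for positive semidefinite $M$, $\|x\|_M=(x^\top Mx)^{1/2}$; for $\beta,\beta'\in\mathbb{R}_{>0}^N$, $\beta\sim\beta'$ iff $\beta=r\beta'$ for some $r>0$, and $\mathbb{R}_{>0}^N/{\sim}$ is the corresponding quotient (the map $f_1$ is invariant and $f_2$ is positively homogeneous in $\beta$, so the system is well defined on the quotient). Definitions: $G_{i,T_h}:=\sum_{k=0}^{T_h-1}A_i^kB_iB_i^\top(A_i^\top)^k$, $\mathcal{G}_i:=(A_i^{T_h})^\top G_{i,T_h}^{-1}A_i^{T_h}$, $\bar A_i:=A_i-B_iB_i^\top(A_i^\top)^{T_h-1}G_{i,T_h}^{-1}A_i^{T_h}$, and $K(x)\in\mathbb{R}_{>0}^{N\times N}$ has entries $K_{ij}(x)=\exp\!\big(-\|x_i-x_j^{\mathsf d}\|_{\mathcal{G}_i}^2/\varepsilon\big)$. This system is the closed loop of Sinkhorn MPC with energy cost and the barycentric target $x_{\rm tmp}^{\mathsf d,i}(P)=N\sum_jP_{ij}x_j^{\mathsf d}$. *)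

theory Defs
  imports "HOL-Analysis.Analysis"
begin

(* Agents are indexed by a finite type 'N (N = CARD('N)), states live in real^'n
   (n = CARD('n)); matrices are real^'n^'n. *)

definition mpow :: "real^'n^'n \<Rightarrow> nat \<Rightarrow> real^'n^'n" where
  "mpow M k = (((**) M) ^^ k) (mat 1)"

definition gram :: "real^'n^'n \<Rightarrow> real^'n^'n \<Rightarrow> nat \<Rightarrow> real^'n^'n" where
  "gram A B Th = (\<Sum>k<Th. mpow A k ** B ** transpose B ** transpose (mpow A k))"

definition calG :: "real^'n^'n \<Rightarrow> real^'n^'n \<Rightarrow> nat \<Rightarrow> real^'n^'n" where
  "calG A B Th = transpose (mpow A Th) ** matrix_inv (gram A B Th) ** mpow A Th"

definition Abar :: "real^'n^'n \<Rightarrow> real^'n^'n \<Rightarrow> nat \<Rightarrow> real^'n^'n" where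
  "Abar A B Th = A - B ** transpose B ** transpose (mpow A (Th - 1))
                   ** matrix_inv (gram A B Th) ** mpow A Th"

definition wnorm :: "real^'n^'n \<Rightarrow> real^'n \<Rightarrow> real" where
  "wnorm M x = sqrt (x \<bullet> (M *v x))"

definition Kmat :: "('N \<Rightarrow> real^'n^'n) \<Rightarrow> ('N \<Rightarrow> real^'n^'n) \<Rightarrow> nat \<Rightarrow> real
     \<Rightarrow> ('N \<Rightarrow> real^'n) \<Rightarrow> ('N \<Rightarrow> real^'n) \<Rightarrow> 'N \<Rightarrow> 'N \<Rightarrow> real" where
  "Kmat A B Th eps xd x i j =
     exp (- (wnorm (calG (A i) (B i) Th) (x i - xd j))\<^sup>2 / eps)"

definition Ptilde :: "('N::finite \<Rightarrow> real^'n^'n) \<Rightarrow> ('N \<Rightarrow> real^'n^'n) \<Rightarrow> nat \<Rightarrow> real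
     \<Rightarrow> ('N \<Rightarrow> real^'n) \<Rightarrow> ('N \<Rightarrow> real^'n) \<Rightarrow> ('N \<Rightarrow> real) \<Rightarrow> 'N \<Rightarrow> 'N \<Rightarrow> real" where
  "Ptilde A B Th eps xd x \<beta> i j =
     ((1 / real CARD('N)) / (\<Sum>l\<in>UNIV. Kmat A B Th eps xd x i l * \<beta> l))
       * Kmat A B Th eps xd x i j * \<beta> j"

definition f1 :: "('N::finite \<Rightarrow> real^'n^'n) \<Rightarrow> ('N \<Rightarrow> real^'n^'n) \<Rightarrow> nat \<Rightarrow> real
     \<Rightarrow> ('N \<Rightarrow> real^'n) \<Rightarrow> ('N \<Rightarrow> real^'n) \<Rightarrow> ('N \<Rightarrow> real) \<Rightarrow> 'N \<Rightarrow> real^'n" where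
  "f1 A B Th eps xd x \<beta> i =
     Abar (A i) (B i) Th *v x i
     + (mat 1 - Abar (A i) (B i) Th) *v
         (real CARD('N) *\<^sub>R (\<Sum>j\<in>UNIV. Ptilde A B Th eps xd x \<beta> i j *\<^sub>R xd j))"

definition f2 :: "('N::finite \<Rightarrow> real^'n^'n) \<Rightarrow> ('N \<Rightarrow> real^'n^'n) \<Rightarrow> nat \<Rightarrow> real
     \<Rightarrow> ('N \<Rightarrow> real^'n) \<Rightarrow> ('N \<Rightarrow> real^'n) \<Rightarrow> ('N \<Rightarrow> real) \<Rightarrow> 'N \<Rightarrow> real" where
  "f2 A B Th eps xd x \<beta> j =
     (1 / real CARD('N)) /
       (\<Sum>i\<in>UNIV. Kmat A B Th eps xd (f1 A B Th eps xd x \<beta>) i j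
          * ((1 / real CARD('N)) / (\<Sum>l\<in>UNIV. Kmat A B Th eps xd x i l * \<beta> l)))"

end

theory Submission
  imports Defs
begin

lemma cont_mv[continuous_intros]:
  fixes M :: "real^'n^'m"
  shows "continuous_on S f \<Longrightarrow> continuous_on S (\<lambda>x. M *v f x)"
  using continuous_on_compose2[OF matrix_vector_mult_linear_continuous_on[of UNIV M]] by auto

lemma Kmat_cont:
  fixes A B :: "'N::finite \<Rightarrow> real^'n^'n"
  shows "continuous_on S (\<lambda>X::(real^'n)^'N. Kmat A B Th eps xd (\<lambda>i. X $ i) i j)"
  unfolding Kmat_def wnorm_def divide_inverse by (intro continuous_intros)

lemma Kmat_cont2[continuous_intros]:
  fixes A B :: "'N::finite \<Rightarrow> real^'n^'n"
  assumes "continuous_on S F"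
  shows "continuous_on S (\<lambda>z. Kmat A B Th eps xd (\<lambda>i. F z $ i) i j)"
  using continuous_on_compose2[OF Kmat_cont[of UNIV] assms] by auto

lemma norm_le_sum_cart: "norm (x::('a::real_normed_vector)^'m) \<le> (\<Sum>i\<in>UNIV. norm (x $ i))"
  unfolding norm_vec_def by (rule L2_set_le_sum) simp

lemma Kmat_pos: "Kmat A B Th eps xd x i j > 0"
  unfolding Kmat_def by simp

theorem proposition2:
  fixes A B :: "'N::finite \<Rightarrow> real^'n^'n"
    and xd :: "'N \<Rightarrow> real^'n"
    and Th :: nat and eps :: real
  assumes "Th > 0" and "eps > 0"
    and "\<And>i. invertible (B i)"
  shows "\<exists>xe :: 'N \<Rightarrow> real^'n. \<exists>\<beta>e :: 'N \<Rightarrow> real.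
           (\<forall>i. \<beta>e i > 0)
         \<and> f1 A B Th eps xd xe \<beta>e = xe
         \<and> (\<exists>r > 0. f2 A B Th eps xd xe \<beta>e = (\<lambda>i. r * \<beta>e i))"
proof -
  define N where "N = real CARD('N)"
  have Npos: "N > 0" unfolding N_def by simp
  define Kx where "Kx X = Kmat A B Th eps xd (\<lambda>i. X $ i)" for X :: "(real^'n)^'N"
  define den where "den X b i = (\<Sum>l\<in>UNIV. Kx X i l * b $ l)" for X b i
  define T where "T X b = (\<chi> i. N *\<^sub>R (\<Sum>j\<in>UNIV. (((1/N) / den X b i) * Kx X i j * b $ j) *\<^sub>R xd j))" for X b
  define h where "h X b = (\<chi> j. (1/N) / (\<Sum>i\<in>UNIV. Kx X i j * ((1/N) / den X b i)))" for X b
  define g where "g z = (T (fst z) (snd z), h (fst z) (snd z) /\<^sub>R sum (\<lambda>j. h (fst z) (snd z) $ j) UNIV)" for z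
  define M where "M = (\<Sum>j\<in>UNIV. norm (xd j))"
  define R where "R = N * M"
  define D where "D = {b::real^'N. (\<forall>j. 0 \<le> b $ j) \<and> sum (\<lambda>j. b $ j) UNIV = 1}"
  define S where "S = cball (0::(real^'n)^'N) R \<times> D"
  have Kpos: "Kx X i j > 0" for X i j unfolding Kx_def by (rule Kmat_pos)
  have Knn: "Kx X i j \<ge> 0" for X i j using Kpos[of X i j] by simp
  have denpos: "den X b i > 0" if "b \<in> D" for X b i
  proof -
    have "\<exists>l. b $ l \<noteq> 0"
    proof (rule ccontr)
      assume "\<not> (\<exists>l. b $ l \<noteq> 0)"
      then have "sum (\<lambda>j. b $ j) UNIV = 0" by simp
      with that show False unfolding D_def by simp
    qed
    then obtain l where "b $ l \<noteq> 0" by blast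
    moreover from that have "0 \<le> b $ l" unfolding D_def by simp
    ultimately have bl: "b $ l > 0" by simp
    have "Kx X i l * b $ l \<le> den X b i" unfolding den_def
      by (rule member_le_sum) (use that in \<open>auto simp: D_def intro!: mult_nonneg_nonneg Knn\<close>)
    moreover have "Kx X i l * b $ l > 0" using bl Kpos by simp
    ultimately show ?thesis by linarith
  qed
  have hpos: "h X b $ j > 0" if "b \<in> D" for X b j
    unfolding h_def using Npos Kpos denpos[OF that]
    by (auto intro!: divide_pos_pos sum_pos mult_pos_pos)
  have hsum: "sum (\<lambda>j. h X b $ j) UNIV > 0" if "b \<in> D" for X b
    using hpos[OF that] by (auto intro!: sum_pos)
  have Psum: "(\<Sum>j\<in>UNIV. ((1/N) / den X b i) * Kx X i j * b $ j) = 1/N" if "b \<in> D" for X b i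
  proof -
    have "(\<Sum>j\<in>UNIV. ((1/N) / den X b i) * Kx X i j * b $ j) = ((1/N) / den X b i) * den X b i"
      unfolding den_def by (simp add: sum_distrib_left mult.assoc)
    also have "\<dots> = 1/N" using denpos[OF that, of X i] by simp
    finally show ?thesis .
  qed
  have wnn: "((1/N) / den X b i) * Kx X i j * b $ j \<ge> 0" if "b \<in> D" for X b i j
    using denpos[OF that, of X i] Kpos[of X i j] Npos that unfolding D_def
    by (auto intro!: mult_nonneg_nonneg less_imp_le)
  have Tb: "norm (T X b $ i) \<le> M" if "b \<in> D" for X b i
  proof -
    let ?w = "\<lambda>j. ((1/N) / den X b i) * Kx X i j * b $ j"
    have "norm (T X b $ i) = N * norm (\<Sum>j\<in>UNIV. ?w j *\<^sub>R xd j)"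
      unfolding T_def using Npos by simp
    also have "\<dots> \<le> N * (\<Sum>j\<in>UNIV. ?w j * M)"
    proof (rule mult_left_mono)
      have "norm (\<Sum>j\<in>UNIV. ?w j *\<^sub>R xd j) \<le> (\<Sum>j\<in>UNIV. norm (?w j *\<^sub>R xd j))"
        by (rule norm_sum)
      also have "\<dots> \<le> (\<Sum>j\<in>UNIV. ?w j * M)"
      proof (rule sum_mono)
        fix j :: 'N
        have "norm (xd j) \<le> M" unfolding M_def by (rule member_le_sum) auto
        have "norm (?w j *\<^sub>R xd j) = ?w j * norm (xd j)"
          using wnn[OF that, of X i j] by (simp only: norm_scaleR abs_of_nonneg)
        also have "\<dots> \<le> ?w j * M"
          by (rule mult_left_mono) (fact, rule wnn[OF that])
        finally show "norm (?w j *\<^sub>R xd j) \<le> ?w j * M" .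
      qed
      finally show "norm (\<Sum>j\<in>UNIV. ?w j *\<^sub>R xd j) \<le> (\<Sum>j\<in>UNIV. ?w j * M)" .
    qed (use Npos in auto)
    also have "\<dots> = N * ((\<Sum>j\<in>UNIV. ?w j) * M)"
      by (simp only: sum_distrib_right)
    also have "\<dots> = M"
      using Psum[OF that, of X i] Npos by simp
    finally show ?thesis .
  qed
  have TR: "norm (T X b) \<le> R" if "b \<in> D" for X b
  proof -
    have "norm (T X b) \<le> (\<Sum>i\<in>UNIV. norm (T X b $ i))" by (rule norm_le_sum_cart)
    also have "\<dots> \<le> (\<Sum>i\<in>(UNIV::'N set). M)" by (rule sum_mono) (rule Tb[OF that])
    also have "\<dots> = R" unfolding R_def N_def by simp
    finally show ?thesis .
  qed
  have gS: "g z \<in> S" if "z \<in> S" for z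
  proof -
    obtain X b where z: "z = (X, b)" by (cases z)
    with that have bD: "b \<in> D" unfolding S_def by auto
    have "T X b \<in> cball 0 R" using TR[OF bD] by simp
    moreover have "h X b /\<^sub>R sum (\<lambda>j. h X b $ j) UNIV \<in> D"
      using hsum[OF bD, of X] hpos[OF bD, of X]
      unfolding D_def by (auto simp: sum_distrib_left[symmetric] less_imp_le)
    ultimately show ?thesis unfolding g_def S_def z by simp
  qed
  have dnz: "\<forall>z\<in>S. den (fst z) (snd z) i \<noteq> 0" for i
    using denpos unfolding S_def by (auto simp: less_imp_neq[symmetric])
  have cK: "continuous_on S (\<lambda>z. Kx (fst z) i j)" for i j
    unfolding Kx_def by (intro continuous_intros)
  have cden: "continuous_on S (\<lambda>z. den (fst z) (snd z) i)" for i
    unfolding den_def by (intro continuous_intros cK)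
  have cw: "continuous_on S (\<lambda>z. (1/N) / den (fst z) (snd z) i)" for i
    by (intro continuous_intros cden dnz)
  have cT: "continuous_on S (\<lambda>z. T (fst z) (snd z))"
    unfolding T_def by (intro continuous_intros cw cK)
  have hnz: "\<forall>z\<in>S. (\<Sum>i\<in>UNIV. Kx (fst z) i j * ((1/N) / den (fst z) (snd z) i)) \<noteq> 0" for j
  proof
    fix z assume "z \<in> S"
    then have "snd z \<in> D" unfolding S_def by auto
    then have "h (fst z) (snd z) $ j > 0" by (rule hpos)
    then show "(\<Sum>i\<in>UNIV. Kx (fst z) i j * ((1/N) / den (fst z) (snd z) i)) \<noteq> 0"
      unfolding h_def by auto
  qed
  have ch: "continuous_on S (\<lambda>z. h (fst z) (snd z))"
    unfolding h_def by (intro continuous_intros cw cK hnz)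
  have snz: "\<forall>z\<in>S. sum (\<lambda>j. h (fst z) (snd z) $ j) UNIV \<noteq> 0"
    using hsum unfolding S_def by (auto simp: less_imp_neq[symmetric])
  have cg: "continuous_on S g"
    unfolding g_def by (intro continuous_intros cT ch snz)
  have "closed D" unfolding D_def
    by (intro closed_Collect_conj closed_Collect_all closed_Collect_le closed_Collect_eq continuous_intros)
  moreover have "bounded D"
  proof -
    have "D \<subseteq> cball 0 1"
    proof
      fix b assume "b \<in> D"
      then have "norm b \<le> (\<Sum>j\<in>UNIV. \<bar>b $ j\<bar>)" "(\<Sum>j\<in>UNIV. \<bar>b $ j\<bar>) = 1"
        using norm_le_l1_cart[of b] unfolding D_def by auto
      then show "b \<in> cball 0 1" by simp
    qed
    then show ?thesis using bounded_cball bounded_subset by blast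
  qed
  ultimately have "compact D" using compact_eq_bounded_closed by blast
  then have cS: "compact S" unfolding S_def by (intro compact_Times compact_cball)
  have "convex D" unfolding convex_def D_def
    by (auto simp: sum.distrib sum_distrib_left[symmetric] intro!: add_nonneg_nonneg mult_nonneg_nonneg)
  then have vS: "convex S" unfolding S_def by (intro convex_Times convex_cball)
  have "M \<ge> 0" unfolding M_def by (auto intro: sum_nonneg)
  then have "R \<ge> 0" unfolding R_def using Npos by simp
  moreover have "(\<chi> j. 1/N) \<in> D" unfolding D_def N_def by simp
  ultimately have "(0, \<chi> j. 1/N) \<in> S" unfolding S_def by simp
  then have nS: "S \<noteq> {}" by blast
  obtain z where "z \<in> S" and gz: "g z = z"
    using brouwer[OF cS vS nS cg] gS by blast
  obtain X b where z: "z = (X, b)" by (cases z)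
  with \<open>z \<in> S\<close> have bD: "b \<in> D" unfolding S_def by auto
  define s where "s = sum (\<lambda>j. h X b $ j) UNIV"
  have spos: "s > 0" unfolding s_def by (rule hsum[OF bD])
  from gz have TX: "T X b = X" and hb: "h X b /\<^sub>R s = b" unfolding g_def z s_def by auto
  have bpos: "b $ j > 0" for j
  proof -
    have "(h X b /\<^sub>R s) $ j = inverse s * h X b $ j" by simp
    then have "b $ j = inverse s * h X b $ j" using hb by simp
    then show ?thesis using hpos[OF bD, of X j] spos by simp
  qed
  have hsb: "h X b = (\<chi> j. s * b $ j)"
    using hb spos by (auto simp: vec_eq_iff field_simps)
  have Pt: "Ptilde A B Th eps xd (\<lambda>i. X $ i) (\<lambda>j. b $ j) i j = ((1/N) / den X b i) * Kx X i j * b $ j" for i j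
    unfolding Ptilde_def den_def Kx_def N_def by simp
  have f1X: "f1 A B Th eps xd (\<lambda>i. X $ i) (\<lambda>j. b $ j) = (\<lambda>i. X $ i)"
  proof
    fix i
    have "real CARD('N) *\<^sub>R (\<Sum>j\<in>UNIV. Ptilde A B Th eps xd (\<lambda>i. X $ i) (\<lambda>j. b $ j) i j *\<^sub>R xd j)
          = T X b $ i" unfolding T_def Pt N_def by simp
    then show "f1 A B Th eps xd (\<lambda>i. X $ i) (\<lambda>j. b $ j) i = X $ i"
      unfolding f1_def TX by (simp add: matrix_vector_mult_diff_rdistrib)
  qed
  have f2X: "f2 A B Th eps xd (\<lambda>i. X $ i) (\<lambda>j. b $ j) = (\<lambda>j. s * b $ j)"
  proof
    fix j
    have "f2 A B Th eps xd (\<lambda>i. X $ i) (\<lambda>j. b $ j) j = h X b $ j"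
      unfolding f2_def f1X h_def Kx_def den_def N_def by simp
    then show "f2 A B Th eps xd (\<lambda>i. X $ i) (\<lambda>j. b $ j) j = s * b $ j" using hsb by simp
  qed
  show ?thesis
    using bpos f1X f2X spos by blast
qed

end
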